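(* Let $n\ge 1$ and let $L \subseteq \{0,1\}^n$ be a nonempty homogeneous language. Then every regular expression describing $L$ has length at least $\mathsf{Arith}(L)$, i.e. $\mathrm{rpn}(L) \geq \mathsf{Arith}(L)$.
   Context: Regular expressions over an alphabet $\Sigma$ are built from $\epsilon$ and letters $a\in\Sigma$ by union $+$, concatenation $\cdot$ and star; expressions are assumed not to contain the symbol $\emptyset$. The length $\mathrm{rpn}(R)$ of an expression $R$ is the number of nodes of its syntax tree, and for a regular language $L$, $\mathrm{rpn}(L)$ is the minimum length of an expression describing $L$. A language is homogeneous if all its words have the same length. A monotone arithmetic formula in variables $x_1,\dots,x_n$ is a rooted tree whose leaves hold a variable $x_i$ or a constant $c\in\mathbb{R}_{\ge 0}$ and whose inner nodes are addition or multiplication gates; its size is its number of nodes. It computes a polynomial $\sum_{a\in A} c_a\prod_{i=1}^n x_i^{a_i}$ with all $c_a>0$, and the finite set $A\subseteq\mathbb{N}^n$ of exponent vectors is called the set produced by the formula. For $A\subseteq \mathbb{N}^n$, $\mathsf{Arith}(A)$ is the minimum size of a monotone arithmetic formula producing exactly $A$ (coefficients are irrelevant). A word $w_1\cdots w_n\in\{0,1\}^n$ is identified with the vector $(w_1,\dots,w_n)$. *)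

theory Defs
  imports Complex_Main
begin

datatype 'a rexp = Eps | Lit 'a | Plus "'a rexp" "'a rexp"
  | Times "'a rexp" "'a rexp" | Star "'a rexp"

definition conc :: "'a list set \<Rightarrow> 'a list set \<Rightarrow> 'a list set" where
  "conc A B = {u @ v | u v. u \<in> A \<and> v \<in> B}"

inductive_set kstar :: "'a list set \<Rightarrow> 'a list set" for A where
  kstar_Nil: "[] \<in> kstar A"
| kstar_app: "u \<in> A \<Longrightarrow> v \<in> kstar A \<Longrightarrow> u @ v \<in> kstar A"

fun lang :: "'a rexp \<Rightarrow> 'a list set" where
  "lang Eps = {[]}"
| "lang (Lit a) = {[a]}"
| "lang (Plus r s) = lang r \<union> lang s"
| "lang (Times r s) = conc (lang r) (lang s)"
| "lang (Star r) = kstar (lang r)"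

fun rpn_size :: "'a rexp \<Rightarrow> nat" where
  "rpn_size Eps = 1"
| "rpn_size (Lit a) = 1"
| "rpn_size (Plus r s) = rpn_size r + rpn_size s + 1"
| "rpn_size (Times r s) = rpn_size r + rpn_size s + 1"
| "rpn_size (Star r) = rpn_size r + 1"

definition rpn :: "'a list set \<Rightarrow> nat" where
  "rpn L = (LEAST k. \<exists>r. lang r = L \<and> rpn_size r = k)"

text \<open>Variables x_1..x_n are represented by indices 0..n-1; exponent vectors in N^n
  are lists of naturals of length n.\<close>

datatype aformula = AVar nat | AConst real | AAdd aformula aformula | AMul aformula aformula

fun af_size :: "aformula \<Rightarrow> nat" where
  "af_size (AVar i) = 1"
| "af_size (AConst c) = 1"
| "af_size (AAdd f g) = af_size f + af_size g + 1"
| "af_size (AMul f g) = af_size f + af_size g + 1"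

fun af_wf :: "nat \<Rightarrow> aformula \<Rightarrow> bool" where
  "af_wf n (AVar i) = (i < n)"
| "af_wf n (AConst c) = (c \<ge> 0)"
| "af_wf n (AAdd f g) = (af_wf n f \<and> af_wf n g)"
| "af_wf n (AMul f g) = (af_wf n f \<and> af_wf n g)"

text \<open>The computed polynomial, given by its coefficient function on exponent vectors.\<close>
fun af_coeff :: "nat \<Rightarrow> aformula \<Rightarrow> nat list \<Rightarrow> real" where
  "af_coeff n (AVar i) e = (if e = (replicate n 0)[i := 1] then 1 else 0)"
| "af_coeff n (AConst c) e = (if e = replicate n 0 then c else 0)"
| "af_coeff n (AAdd f g) e = af_coeff n f e + af_coeff n g e"
| "af_coeff n (AMul f g) e =
     (\<Sum>(a, b) \<in> {(a, b). length a = n \<and> length b = n \<and> map2 (+) a b = e}.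
        af_coeff n f a * af_coeff n g b)"

definition produced :: "nat \<Rightarrow> aformula \<Rightarrow> nat list set" where
  "produced n f = {e. length e = n \<and> af_coeff n f e \<noteq> 0}"

definition Arith :: "nat \<Rightarrow> nat list set \<Rightarrow> nat" where
  "Arith n A = (LEAST k. \<exists>f. af_wf n f \<and> produced n f = A \<and> af_size f = k)"

end

theory Submission
  imports Defs
begin

fun wlen :: "nat rexp \<Rightarrow> nat" where
  "wlen Eps = 0"
| "wlen (Lit a) = 1"
| "wlen (Plus r s) = wlen r"
| "wlen (Times r s) = wlen r + wlen s"
| "wlen (Star r) = 0"

lemma wlen_ex: "\<exists>w \<in> lang r. length w = wlen r"
proof (induction r)
  case (Times r s)
  then obtain u v where "u \<in> lang r" "length u = wlen r" "v \<in> lang s" "length v = wlen s" by auto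
  then have "u @ v \<in> lang (Times r s)" by (auto simp: conc_def)
  then show ?case using \<open>length u = wlen r\<close> \<open>length v = wlen s\<close> by (intro bexI[of _ "u @ v"]) auto
qed (auto intro: kstar.intros)

fun T :: "nat \<Rightarrow> nat rexp \<Rightarrow> aformula" where
  "T p Eps = AConst 1"
| "T p (Lit a) = (if a = 0 then AConst 1 else AVar p)"
| "T p (Plus r s) = AAdd (T p r) (T p s)"
| "T p (Times r s) = AMul (T p r) (T (p + wlen r) s)"
| "T p (Star r) = AConst 1"

lemma T_size: "af_size (T p r) \<le> rpn_size r"
  by (induction r arbitrary: p) (auto intro: add_mono)

definition vec :: "nat \<Rightarrow> nat \<Rightarrow> nat list \<Rightarrow> nat list" where
  "vec n p w = map (\<lambda>i. if p \<le> i \<and> i < p + length w then w ! (i - p) else 0) [0..<n]"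

lemma vec_len[simp]: "length (vec n p w) = n" by (simp add: vec_def)

lemma vec_nil: "vec n p [] = replicate n 0"
  by (rule nth_equalityI) (auto simp: vec_def)

lemma vec_zero: "vec n p [0] = replicate n 0"
  by (rule nth_equalityI) (auto simp: vec_def)

lemma vec_one: "p < n \<Longrightarrow> vec n p [1] = (replicate n 0)[p := 1]"
  by (rule nth_equalityI) (auto simp: vec_def nth_list_update)

lemma vec_full: "length w = n \<Longrightarrow> vec n 0 w = w"
  by (rule nth_equalityI) (auto simp: vec_def)

lemma vec_app:
  assumes "length u = k" "p + k + length v \<le> n"
  shows "map2 (+) (vec n p u) (vec n (p + k) v) = vec n p (u @ v)"
  by (rule nth_equalityI) (use assms in \<open>auto simp: vec_def nth_append\<close>)

lemma vec_inj: "vec n p u = vec n p v \<Longrightarrow> length u = length v \<Longrightarrow> p + length u \<le> n \<Longrightarrow> u = v"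
proof (rule nth_equalityI)
  fix i assume a: "vec n p u = vec n p v" "length u = length v" "p + length u \<le> n" "i < length u"
  then have "vec n p u ! (p + i) = vec n p v ! (p + i)" by simp
  then show "u ! i = v ! i" using a by (simp add: vec_def)
qed

lemma pairs_finite: "finite {(a, b). length a = n \<and> length b = n \<and> map2 (+) a b = (e::nat list)}"
proof -
  let ?A = "{xs. set xs \<subseteq> {..sum_list e} \<and> length xs = n}"
  have fA: "finite ?A" by (rule finite_lists_length_eq) auto
  have "{(a, b). length a = n \<and> length b = n \<and> map2 (+) a b = e} \<subseteq> ?A \<times> ?A"
  proof
    fix x assume "x \<in> {(a, b). length a = n \<and> length b = n \<and> map2 (+) a b = e}"
    then obtain a b where x: "x = (a, b)" and h: "length a = n" "length b = n" "e = map2 (+) a b" by auto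
    have "\<forall>i<n. a ! i \<le> sum_list e \<and> b ! i \<le> sum_list e"
    proof (intro allI impI)
      fix i assume "i < n"
      then have "e ! i = a ! i + b ! i" "i < length e" using h by auto
      moreover have "e ! i \<le> sum_list e" using \<open>i < length e\<close> by (rule elem_le_sum_list)
      ultimately show "a ! i \<le> sum_list e \<and> b ! i \<le> sum_list e" by linarith
    qed
    then show "x \<in> ?A \<times> ?A" using h x by (fastforce simp: in_set_conv_nth)
  qed
  then show ?thesis using fA by (meson finite_SigmaI finite_subset)
qed

definition hom :: "nat \<Rightarrow> nat list set \<Rightarrow> bool" where
  "hom k A = (\<forall>w\<in>A. length w = k \<and> set w \<subseteq> {0, 1})"

lemma kstar_eps: "A \<subseteq> {[]} \<Longrightarrow> kstar A = {[]}"
proof -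
  assume A: "A \<subseteq> {[]}"
  have "w \<in> kstar A \<Longrightarrow> w = []" for w
    by (induction rule: kstar.induct) (use A in auto)
  then show ?thesis by (auto intro: kstar.intros)
qed

lemma main:
  assumes "hom k (lang r)" "p + k \<le> n"
  shows "af_wf n (T p r) \<and> (\<forall>e. af_coeff n (T p r) e \<ge> 0)
     \<and> {e. af_coeff n (T p r) e \<noteq> 0} = vec n p ` lang r"
  using assms
proof (induction r arbitrary: p k)
  case Eps
  then show ?case by (auto simp: vec_nil)
next
  case (Lit a)
  then have "a \<in> {0,1}" "k = 1" by (auto simp: hom_def)
  then show ?case using Lit by (auto simp: vec_zero vec_one[simplified])
next
  case (Plus r s)
  then have "hom k (lang r)" "hom k (lang s)" by (auto simp: hom_def)
  with Plus.IH[of k p] Plus.prems show ?case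
    by (auto simp: add_nonneg_eq_0_iff)
next
  case (Times r s)
  obtain u0 where u0: "u0 \<in> lang r" "length u0 = wlen r" using wlen_ex by blast
  obtain v0 where v0: "v0 \<in> lang s" "length v0 = wlen s" using wlen_ex by blast
  have hr: "hom (wlen r) (lang r)"
    unfolding hom_def
  proof
    fix u assume "u \<in> lang r"
    then have "u @ v0 \<in> lang (Times r s)" "u0 @ v0 \<in> lang (Times r s)"
      using u0 v0 by (auto simp: conc_def)
    then have "length (u @ v0) = k" "set (u @ v0) \<subseteq> {0, 1}" "length (u0 @ v0) = k"
      using Times.prems(1) unfolding hom_def by blast+
    then show "length u = wlen r \<and> set u \<subseteq> {0, 1}" using u0 by auto
  qed
  have hs: "hom (wlen s) (lang s)"
    unfolding hom_def
  proof
    fix v assume "v \<in> lang s"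
    then have "u0 @ v \<in> lang (Times r s)" "u0 @ v0 \<in> lang (Times r s)"
      using u0 v0 by (auto simp: conc_def)
    then have "length (u0 @ v) = k" "set (u0 @ v) \<subseteq> {0, 1}" "length (u0 @ v0) = k"
      using Times.prems(1) unfolding hom_def by blast+
    then show "length v = wlen s \<and> set v \<subseteq> {0, 1}" using v0 by auto
  qed
  have "u0 @ v0 \<in> lang (Times r s)" using u0 v0 by (auto simp: conc_def)
  then have "length (u0 @ v0) = k" using Times.prems(1) unfolding hom_def by blast
  then have k: "k = wlen r + wlen s" using u0 v0 by simp
  note IHr = Times.IH(1)[OF hr, of p] and IHs = Times.IH(2)[OF hs, of "p + wlen r"]
  have le1: "p + wlen r \<le> n" and le2: "p + wlen r + wlen s \<le> n" using Times.prems k by auto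
  let ?S = "\<lambda>e. {(a, b). length a = n \<and> length b = n \<and> map2 (+) a b = e}"
  have nn: "\<forall>e. af_coeff n (T p (Times r s)) e \<ge> 0"
    using IHr[OF le1] IHs[OF le2]
    by (auto intro!: sum_nonneg mult_nonneg_nonneg split: prod.splits)
  have sub1: "{e. af_coeff n (T p (Times r s)) e \<noteq> 0} \<subseteq> vec n p ` lang (Times r s)"
  proof
    fix e assume "e \<in> {e. af_coeff n (T p (Times r s)) e \<noteq> 0}"
    then have "(\<Sum>(a, b) \<in> ?S e. af_coeff n (T p r) a * af_coeff n (T (p + wlen r) s) b) \<noteq> 0"
      by simp
    then obtain a b where ab: "(a, b) \<in> ?S e" "af_coeff n (T p r) a \<noteq> 0"
      "af_coeff n (T (p + wlen r) s) b \<noteq> 0"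
      by (metis (no_types, lifting) case_prod_conv mult_zero_left mult_zero_right sum.neutral surj_pair)
    then obtain u v where uv: "u \<in> lang r" "a = vec n p u" "v \<in> lang s" "b = vec n (p + wlen r) v"
      using IHr[OF le1] IHs[OF le2] by blast
    have "length u = wlen r" "length v = wlen s" using uv hr hs by (auto simp: hom_def)
    then have "e = vec n p (u @ v)" using ab(1) uv vec_app[of u "wlen r" p v n] le2 by auto
    then show "e \<in> vec n p ` lang (Times r s)" using uv by (auto simp: conc_def)
  qed
  have sub2: "vec n p ` lang (Times r s) \<subseteq> {e. af_coeff n (T p (Times r s)) e \<noteq> 0}"
  proof
    fix e assume "e \<in> vec n p ` lang (Times r s)"
    then obtain u v where uv: "u \<in> lang r" "v \<in> lang s" "e = vec n p (u @ v)"
      by (auto simp: conc_def)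
    have "length u = wlen r" "length v = wlen s" using uv hr hs by (auto simp: hom_def)
    then have mem: "(vec n p u, vec n (p + wlen r) v) \<in> ?S e" using uv vec_app[of u "wlen r" p v n] le2 by auto
    have c1: "af_coeff n (T p r) (vec n p u) \<noteq> 0" using IHr[OF le1] uv by blast
    have c2: "af_coeff n (T (p + wlen r) s) (vec n (p + wlen r) v) \<noteq> 0" using IHs[OF le2] uv by blast
    have nn1: "\<forall>x. (case x of (a, b) \<Rightarrow> af_coeff n (T p r) a * af_coeff n (T (p + wlen r) s) b) \<ge> 0"
      using IHr[OF le1] IHs[OF le2] by (auto intro!: mult_nonneg_nonneg split: prod.splits)
    have "(\<Sum>(a, b) \<in> ?S e. af_coeff n (T p r) a * af_coeff n (T (p + wlen r) s) b) \<noteq> 0"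
    proof
      assume "(\<Sum>(a, b) \<in> ?S e. af_coeff n (T p r) a * af_coeff n (T (p + wlen r) s) b) = 0"
      then have "\<forall>x\<in>?S e. (case x of (a, b) \<Rightarrow> af_coeff n (T p r) a * af_coeff n (T (p + wlen r) s) b) = 0"
        using sum_nonneg_eq_0_iff[OF pairs_finite] nn1 by blast
      from bspec[OF this mem] have "af_coeff n (T p r) (vec n p u) * af_coeff n (T (p + wlen r) s) (vec n (p + wlen r) v) = 0"
        by simp
      then show False using c1 c2 by simp
    qed
    then show "e \<in> {e. af_coeff n (T p (Times r s)) e \<noteq> 0}" by simp
  qed
  show ?case using IHr[OF le1] IHs[OF le2] nn sub1 sub2 by auto
next
  case (Star r)
  have "lang r \<subseteq> {[]}"
  proof
    fix u assume u: "u \<in> lang r"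
    have a: "u @ [] \<in> kstar (lang r)" by (rule kstar_app[OF u kstar_Nil])
    have b: "u @ (u @ []) \<in> kstar (lang r)" by (rule kstar_app[OF u kstar_app[OF u kstar_Nil]])
    have "length (u @ []) = k" "length (u @ (u @ [])) = k"
      using Star.prems(1) a b unfolding hom_def lang.simps by blast+
    then have "u = []" by simp
    then show "u \<in> {[]}" by simp
  qed
  then have "lang (Star r) = {[]}" by (simp add: kstar_eps)
  then show ?case by (auto simp: vec_nil)
qed

fun word_rexp :: "nat list \<Rightarrow> nat rexp" where
  "word_rexp [] = Eps"
| "word_rexp (a # w) = Times (Lit a) (word_rexp w)"

lemma word_rexp_lang: "lang (word_rexp w) = {w}"
  by (induction w) (auto simp: conc_def)

lemma finite_rexp: "finite A \<Longrightarrow> A \<noteq> {} \<Longrightarrow> \<exists>r. lang r = (A :: nat list set)"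
proof (induction A rule: finite_ne_induct)
  case (singleton x)
  then show ?case using word_rexp_lang by blast
next
  case (insert x F)
  then obtain r where "lang r = F" by blast
  then have "lang (Plus (word_rexp x) r) = insert x F" by (simp add: word_rexp_lang)
  then show ?case by blast
qed

theorem theorem4p2:
  fixes n :: nat and L :: "nat list set"
  assumes "n \<ge> 1"
    and "L \<noteq> {}"
    and "L \<subseteq> {w. length w = n \<and> set w \<subseteq> {0, 1}}"
  shows "(\<forall>r :: nat rexp. lang r = L \<longrightarrow> Arith n L \<le> rpn_size r) \<and> rpn L \<ge> Arith n L"
proof -
  have A: "Arith n L \<le> rpn_size r" if r: "lang r = L" for r :: "nat rexp"
  proof -
    have h: "hom n (lang r)" using r assms(3) by (auto simp: hom_def)
    note M = main[OF h, of 0 n, simplified]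
    have "produced n (T 0 r) = vec n 0 ` L"
      using M r by (auto simp: produced_def)
    also have "\<dots> = L"
    proof -
      have "\<forall>w\<in>L. vec n 0 w = w" using assms(3) vec_full by auto
      then show ?thesis by (simp add: image_cong)
    qed
    finally have "Arith n L \<le> af_size (T 0 r)"
      unfolding Arith_def using M by (intro Least_le) blast
    also have "\<dots> \<le> rpn_size r" by (rule T_size)
    finally show ?thesis .
  qed
  have fin: "finite L"
  proof (rule finite_subset[OF assms(3)])
    show "finite {w. length w = n \<and> set w \<subseteq> {0::nat, 1}}"
      using finite_lists_length_eq[of "{0::nat,1}" n] by (simp add: conj_commute)
  qed
  obtain r0 where r0: "lang r0 = L" using finite_rexp[OF fin assms(2)] by blast
  have "\<exists>r. lang r = L \<and> rpn_size r = rpn L"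
    unfolding rpn_def by (rule LeastI_ex) (use r0 in blast)
  then have "rpn L \<ge> Arith n L" using A by metis
  then show ?thesis using A by blast
qed

end
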